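(* For the operator $A\colon c_c\to c_c$, $(Ax)_1=x_1$, $(Ax)_n=x_n-x_{n-1}$ ($n>1$), with adjoint $A^*\colon\ell^2\to\ell^2$, we have $$\partial(f\circ A)(0)=\{0\}\neq\emptyset=A^*\,\partial f(A0).$$
   Context: Let $c_c$ be the space of finitely supported real sequences with the $\ell^2$-norm; its dual is identified with $\ell^2$ via $\langle z,y\rangle=\sum_n z_ny_n$. Let $f\colon c_c\to\mathbb{R}$, $f(x)=\sum_{n=1}^\infty \frac{n^2}{2}(x_n-n^{-2})^2$. For convex $h\colon c_c\to(-\infty,\infty]$ and $x$ with $h(x)<\infty$, $\partial h(x)=\{z\in\ell^2:\forall y\in c_c:\ h(y)\ge h(x)+\langle z,y-x\rangle\}$. The adjoint $A^*\colon\ell^2\to\ell^2$ is defined by $\langle A^*z,x\rangle=\langle z,Ax\rangle$ for all $z\in\ell^2$, $x\in c_c$. *)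

theory Defs
  imports "HOL-Analysis.Analysis" "HOL-Library.Function_Algebras"
begin

(* Sequences are 0-indexed: the paper's coordinate x_n (n >= 1) is  x (n - 1). *)

definition cc :: "(nat \<Rightarrow> real) set" where
  "cc = {x. finite {n. x n \<noteq> 0}}"

definition l2 :: "(nat \<Rightarrow> real) set" where
  "l2 = {z. summable (\<lambda>n. (z n)\<^sup>2)}"

definition pair :: "(nat \<Rightarrow> real) \<Rightarrow> (nat \<Rightarrow> real) \<Rightarrow> real" where
  "pair z y = (\<Sum>n. z n * y n)"

definition subdiff :: "((nat \<Rightarrow> real) \<Rightarrow> real) \<Rightarrow> (nat \<Rightarrow> real) \<Rightarrow> (nat \<Rightarrow> real) set" where
  "subdiff h x = {z \<in> l2. \<forall>y \<in> cc. h y \<ge> h x + pair z (y - x)}"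

definition f :: "(nat \<Rightarrow> real) \<Rightarrow> real" where
  "f x = (\<Sum>k. (real (Suc k))\<^sup>2 / 2 * (x k - 1 / (real (Suc k))\<^sup>2)\<^sup>2)"

definition A :: "(nat \<Rightarrow> real) \<Rightarrow> (nat \<Rightarrow> real)" where
  "A x = (\<lambda>k. if k = 0 then x 0 else x k - x (k - 1))"

definition adjoint_cc :: "((nat \<Rightarrow> real) \<Rightarrow> (nat \<Rightarrow> real)) \<Rightarrow> (nat \<Rightarrow> real) \<Rightarrow> (nat \<Rightarrow> real)" where
  "adjoint_cc T z = (THE w. w \<in> l2 \<and> (\<forall>x \<in> cc. pair w x = pair z (T x)))"

end

theory Submission
  imports Defs
begin

definition gg :: "nat \<Rightarrow> (nat \<Rightarrow> real) \<Rightarrow> real" where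
  "gg k x = (real (Suc k))\<^sup>2 / 2 * (x k - 1 / (real (Suc k))\<^sup>2)\<^sup>2"

definition hh :: "nat \<Rightarrow> (nat \<Rightarrow> real) \<Rightarrow> real" where
  "hh k x = (real (Suc k))\<^sup>2 / 2 * (x k)\<^sup>2 - x k"

lemma gg_aux: "(c::real) > 0 \<Longrightarrow> c / 2 * (a - 1 / c)\<^sup>2 = c / 2 * (0 - 1/c)\<^sup>2 + (c/2 * a\<^sup>2 - a)"
  by (simp add: power2_eq_square field_simps)

lemma gg_split: "gg k x = gg k 0 + hh k x"
  unfolding gg_def hh_def using gg_aux[of "(real (Suc k))\<^sup>2" "x k"] by simp

lemma summable_gg0: "summable (\<lambda>k. gg k 0)"
proof -
  have "summable (\<lambda>n. 1 / (real n + 1)\<^sup>2)"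
    using inverse_squares_sums by (simp add: sums_iff add.commute)
  then have "summable (\<lambda>n. (1/2) * (1 / (real n + 1)\<^sup>2))" by (rule summable_mult)
  moreover have "gg k 0 = (1/2) * (1 / (real k + 1)\<^sup>2)" for k
  proof -
    have "\<And>c::real. c > 0 \<Longrightarrow> c/2 * (0 - 1/c)\<^sup>2 = (1/2) * (1/c)"
      by (simp add: power2_eq_square field_simps)
    from this[of "(real (Suc k))\<^sup>2"] show ?thesis unfolding gg_def by (simp add: add.commute)
  qed
  ultimately show ?thesis by simp
qed

lemma f_eq:
  assumes "finite S" "\<And>k. k \<notin> S \<Longrightarrow> x k = 0"
  shows "f x = f 0 + (\<Sum>k\<in>S. hh k x)"
proof -
  have h0: "hh k x = 0" if "k \<notin> S" for k using assms(2)[OF that] by (simp add: hh_def)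
  have sh: "summable (\<lambda>k. hh k x)"
    by (rule summable_finite[OF assms(1)]) (use h0 in auto)
  have si: "suminf (\<lambda>k. hh k x) = (\<Sum>k\<in>S. hh k x)"
    by (rule suminf_finite[OF assms(1)]) (use h0 in auto)
  have "f x = (\<Sum>k. gg k x)" unfolding f_def gg_def by simp
  also have "\<dots> = (\<Sum>k. gg k 0 + hh k x)" by (simp add: gg_split[symmetric])
  also have "\<dots> = (\<Sum>k. gg k 0) + (\<Sum>k. hh k x)"
    by (rule suminf_add[OF summable_gg0 sh, symmetric])
  also have "(\<Sum>k. gg k 0) = f 0" unfolding f_def gg_def by simp
  finally show ?thesis using si by simp
qed

lemma pair_finite:
  assumes "finite S" "\<And>k. k \<notin> S \<Longrightarrow> y k = 0"
  shows "pair z y = (\<Sum>k\<in>S. z k * y k)"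
  unfolding pair_def by (rule suminf_finite[OF assms(1)]) (use assms(2) in auto)

lemma quad_zero:
  fixes a C :: real
  assumes "C > 0" "\<And>t. t * a \<le> t\<^sup>2 * C"
  shows "a = 0"
proof -
  have "(a/(2*C)) * a \<le> (a/(2*C))\<^sup>2 * C" by (rule assms(2))
  then have "a\<^sup>2 / (2*C) \<le> a\<^sup>2 / (4*C)" using assms(1)
    by (simp add: power2_eq_square field_simps)
  then have "a\<^sup>2 \<le> 0" using assms(1) by (simp add: field_simps)
  then show ?thesis by simp
qed

lemma A_zero: "A 0 = 0" by (auto simp: A_def)

lemma A_tele: "(\<Sum>k<Suc n. A y k) = y n"
  by (induction n) (auto simp: A_def)

lemma cc_bound: "x \<in> cc \<Longrightarrow> \<exists>N. \<forall>k\<ge>N. x k = 0"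
proof -
  assume "x \<in> cc"
  then have "finite {n. x n \<noteq> 0}" by (simp add: cc_def)
  then obtain N where "\<forall>n\<in>{n. x n \<noteq> 0}. n < N"
    by (meson finite_nat_set_iff_bounded)
  then show ?thesis by (metis leD mem_Collect_eq)
qed

definition ee :: "nat \<Rightarrow> real \<Rightarrow> nat \<Rightarrow> real" where
  "ee k t = (\<lambda>j. if j = k then t else 0)"

lemma ee_cc: "ee k t \<in> cc"
  unfolding cc_def ee_def
  by (rule CollectI, rule finite_subset[of _ "{k}"]) auto

lemma A_ee: "A (ee k t) j = (if j = k then t else if j = Suc k then - t else 0)"
  by (cases j) (auto simp: A_def ee_def)

lemma subdiff_fA: "subdiff (f \<circ> A) 0 = {0}"
proof
  show "{0} \<subseteq> subdiff (f \<circ> A) 0"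
  proof -
    have "f (A 0) + pair 0 (y - 0) \<le> f (A y)" if y: "y \<in> cc" for y
    proof -
      obtain N where N: "\<forall>k\<ge>N. y k = 0" using cc_bound[OF y] by blast
      have Az: "A y k = 0" if "k \<notin> {..<Suc N}" for k
        using that N by (auto simp: A_def)
      have "f (A y) = f 0 + (\<Sum>k<Suc N. hh k (A y))"
        by (rule f_eq) (use Az in auto)
      also have "(\<Sum>k<Suc N. hh k (A y)) = (\<Sum>k<Suc N. (real (Suc k))\<^sup>2 / 2 * (A y k)\<^sup>2) - (\<Sum>k<Suc N. A y k)"
        unfolding hh_def by (simp add: sum_subtractf)
      also have "(\<Sum>k<Suc N. A y k) = 0" using A_tele N by simp
      finally have "f (A y) = f 0 + (\<Sum>k<Suc N. (real (Suc k))\<^sup>2 / 2 * (A y k)\<^sup>2)" by (simp add: zero_fun_def)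
      moreover have "(\<Sum>k<Suc N. (real (Suc k))\<^sup>2 / 2 * (A y k)\<^sup>2) \<ge> 0"
        by (rule sum_nonneg) simp
      moreover have "pair 0 (y - 0) = 0" by (simp add: pair_def)
      ultimately show ?thesis by (simp add: A_zero)
    qed
    moreover have "(0::nat\<Rightarrow>real) \<in> l2" by (simp add: l2_def)
    ultimately show ?thesis by (auto simp: subdiff_def)
  qed
next
  show "subdiff (f \<circ> A) 0 \<subseteq> {0}"
  proof
    fix z assume z: "z \<in> subdiff (f \<circ> A) 0"
    have "z k = 0" for k
    proof (rule quad_zero)
      let ?C = "((real (Suc k))\<^sup>2 + (real (Suc (Suc k)))\<^sup>2) / 2"
      show "?C > 0" by (simp add: add_pos_pos)
      fix t
      have le: "f (A 0) + pair z (ee k t - 0) \<le> f (A (ee k t))"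
        using z ee_cc by (auto simp: subdiff_def)
      have "pair z (ee k t - 0) = z k * t"
        by (subst pair_finite[of "{k}"]) (auto simp: ee_def)
      moreover have "f (A (ee k t)) = f 0 + (hh k (A (ee k t)) + hh (Suc k) (A (ee k t)))"
        by (subst f_eq[of "{k, Suc k}"]) (auto simp: A_ee)
      moreover have "hh k (A (ee k t)) + hh (Suc k) (A (ee k t)) = t\<^sup>2 * ?C"
        by (simp add: hh_def A_ee power2_eq_square field_simps)
      ultimately show "t * z k \<le> t\<^sup>2 * ?C" using le by (simp add: A_zero mult.commute)
    qed
    then show "z \<in> {0}" by auto
  qed
qed

lemma subdiff_f_empty: "subdiff f (A 0) = {}"
proof (rule ccontr)
  assume "subdiff f (A 0) \<noteq> {}"
  then obtain z where z: "z \<in> subdiff f 0" by (auto simp: A_zero)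
  have "z k + 1 = 0" for k
  proof (rule quad_zero)
    let ?C = "(real (Suc k))\<^sup>2 / 2"
    show "?C > 0" by simp
    fix t
    have le: "f 0 + pair z (ee k t - 0) \<le> f (ee k t)"
      using z ee_cc by (auto simp: subdiff_def)
    have "pair z (ee k t - 0) = z k * t"
      by (subst pair_finite[of "{k}"]) (auto simp: ee_def)
    moreover have "f (ee k t) = f 0 + hh k (ee k t)"
      by (subst f_eq[of "{k}"]) (auto simp: ee_def)
    moreover have "hh k (ee k t) = t\<^sup>2 * ?C - t"
      by (simp add: hh_def ee_def)
    ultimately show "t * (z k + 1) \<le> t\<^sup>2 * ?C" using le by (simp add: algebra_simps)
  qed
  then have "\<And>k. (z k)\<^sup>2 = 1" by (metis add_eq_0_iff power2_minus one_power2)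
  moreover have "summable (\<lambda>n. (z n)\<^sup>2)" using z by (simp add: subdiff_def l2_def)
  ultimately have "summable (\<lambda>n. 1::real)" by simp
  then have "(\<lambda>n. 1::real) \<longlonglongrightarrow> 0" by (rule summable_LIMSEQ_zero)
  then show False by (simp add: LIMSEQ_const_iff)
qed

theorem mainTheorem11:
  shows "subdiff (f \<circ> A) 0 = {0} \<and> {0::nat \<Rightarrow> real} \<noteq> {}
         \<and> adjoint_cc A ` subdiff f (A 0) = {}"
  using subdiff_fA subdiff_f_empty by simp

end
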